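(* Let $R$ be a commutative ring with unit and let $f,g\in R[q]$ be monic polynomials with $f\Rightarrow_R g$. Then the homomorphism $\rho^R_{(fg),(f)}\colon R[q]^{(fg)}\to R[q]^{(f)}$ induced by the identity of $R[q]$ is injective.
   Context: $q$ is an indeterminate. For an element $h\in R[q]$, $R[q]^{(h)}=\varprojlim_j R[q]/(h)^j$ is the $(h)$-adic completion. For monic $f,g\in R[q]$ write $f\Rightarrow_R g$ if there exist an ideal $I\subset R$ with $\bigcap_{j\ge0}I^j=(0)$ and an integer $m\ge0$ such that $f^m\in(g)+I[q]$. *)

theory Defs
  imports "HOL-Computational_Algebra.Polynomial"
begin

definition is_ideal :: "'a::comm_ring_1 set \<Rightarrow> bool" where
  "is_ideal I \<longleftrightarrow> 0 \<in> I \<and> (\<forall>a\<in>I. \<forall>b\<in>I. a + b \<in> I) \<and> (\<forall>a\<in>I. \<forall>r. r * a \<in> I)"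

definition ideal_gen :: "'a::comm_ring_1 set \<Rightarrow> 'a set" where
  "ideal_gen S = \<Inter>{J. is_ideal J \<and> S \<subseteq> J}"

definition ideal_pow :: "'a::comm_ring_1 set \<Rightarrow> nat \<Rightarrow> 'a set" where
  "ideal_pow I j = ideal_gen {prod_list xs | xs. length xs = j \<and> set xs \<subseteq> I}"

definition poly_ext :: "'a::comm_ring_1 set \<Rightarrow> 'a poly set" where
  "poly_ext I = {p. \<forall>i. coeff p i \<in> I}"

definition poly_implies :: "'a::comm_ring_1 poly \<Rightarrow> 'a poly \<Rightarrow> bool" where
  "poly_implies f g \<longleftrightarrow>
     (\<exists>I m. is_ideal I \<and> (\<Inter>j. ideal_pow I j) = {0} \<and>
            (\<exists>a b. b \<in> poly_ext I \<and> f ^ m = g * a + b))"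

definition res_class :: "'a::comm_ring_1 poly \<Rightarrow> nat \<Rightarrow> 'a poly \<Rightarrow> 'a poly set" where
  "res_class h j p = {r. h ^ j dvd (r - p)}"

text \<open>The (h)-adic completion R[q]^(h) = lim_j R[q]/(h)^j, realised as compatible
  families of residue classes (the transition maps send the class of p mod h^(j+1)
  to the class of p mod h^j, i.e. the former is contained in the latter).\<close>
definition adic_completion :: "'a::comm_ring_1 poly \<Rightarrow> (nat \<Rightarrow> 'a poly set) set" where
  "adic_completion h = {c. (\<forall>j. \<exists>p. c j = res_class h j p) \<and> (\<forall>j. c (Suc j) \<subseteq> c j)}"

definition completion_map :: "'a::comm_ring_1 poly \<Rightarrow> (nat \<Rightarrow> 'a poly set) \<Rightarrow> (nat \<Rightarrow> 'a poly set)" where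
  "completion_map h2 c = (\<lambda>j. \<Union>p\<in>c j. res_class h2 j p)"

end

theory Submission imports Defs begin
lemma ideal_gen_ideal: "is_ideal (ideal_gen S)"
  unfolding is_ideal_def ideal_gen_def by auto

lemma ideal_gen_sub: "S \<subseteq> ideal_gen S"
  unfolding ideal_gen_def by auto

lemma ideal_gen_least: "is_ideal J \<Longrightarrow> S \<subseteq> J \<Longrightarrow> ideal_gen S \<subseteq> J"
  unfolding ideal_gen_def by auto

lemma ideal_0: "is_ideal I \<Longrightarrow> 0 \<in> I" unfolding is_ideal_def by auto
lemma ideal_add: "is_ideal I \<Longrightarrow> a \<in> I \<Longrightarrow> b \<in> I \<Longrightarrow> a + b \<in> I" unfolding is_ideal_def by auto
lemma ideal_lmult: "is_ideal I \<Longrightarrow> a \<in> I \<Longrightarrow> r * a \<in> I" unfolding is_ideal_def by auto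
lemma ideal_rmult: "is_ideal I \<Longrightarrow> a \<in> I \<Longrightarrow> a * r \<in> I" unfolding is_ideal_def by (auto simp: mult.commute)
lemma ideal_uminus: "is_ideal I \<Longrightarrow> a \<in> I \<Longrightarrow> - a \<in> I"
  using ideal_lmult[of I a "-1"] by simp
lemma ideal_diff: "is_ideal I \<Longrightarrow> a \<in> I \<Longrightarrow> b \<in> I \<Longrightarrow> a - b \<in> I"
  using ideal_add[of I a "-b"] ideal_uminus[of I b] by simp
lemma ideal_sum: "is_ideal I \<Longrightarrow> (\<And>i. i \<in> A \<Longrightarrow> h i \<in> I) \<Longrightarrow> sum h A \<in> I"
  by (induction A rule: infinite_finite_induct) (auto simp: ideal_0 ideal_add)

lemma ideal_pow_ideal: "is_ideal (ideal_pow I n)"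
  unfolding ideal_pow_def by (rule ideal_gen_ideal)

lemma ideal_pow_0: "1 \<in> ideal_pow I 0"
proof -
  have "1 \<in> {prod_list xs | xs. length xs = 0 \<and> set xs \<subseteq> I}"
    by (rule CollectI, rule exI[of _ "[]"]) simp
  then show ?thesis unfolding ideal_pow_def by (rule subsetD[OF ideal_gen_sub])
qed

lemma ideal_pow_Suc:
  assumes I: "is_ideal I" and x: "x \<in> ideal_pow I n" and y: "y \<in> I"
  shows "x * y \<in> ideal_pow I (Suc n)"
proof -
  let ?K = "ideal_pow I (Suc n)"
  have K: "is_ideal ?K" by (rule ideal_pow_ideal)
  let ?J = "{z. \<forall>y\<in>I. z * y \<in> ?K}"
  have J: "is_ideal ?J"
    unfolding is_ideal_def
  proof (intro conjI ballI allI)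
    show "0 \<in> ?J" using ideal_0[OF K] by simp
  next
    fix a b assume a: "a \<in> ?J" and b: "b \<in> ?J"
    show "a + b \<in> ?J"
    proof (rule CollectI, rule ballI)
      fix y assume "y \<in> I"
      then have "a*y \<in> ?K" "b*y \<in> ?K" using a b by auto
      then show "(a+b)*y \<in> ?K" unfolding distrib_right by (rule ideal_add[OF K])
    qed
  next
    fix a r assume a: "a \<in> ?J"
    show "r * a \<in> ?J"
    proof (rule CollectI, rule ballI)
      fix y assume "y \<in> I"
      then have "a*y \<in> ?K" using a by auto
      then show "(r*a)*y \<in> ?K" unfolding mult.assoc by (rule ideal_lmult[OF K])
    qed
  qed
  have "{prod_list xs | xs. length xs = n \<and> set xs \<subseteq> I} \<subseteq> ?J"
  proof
    fix z assume "z \<in> {prod_list xs | xs. length xs = n \<and> set xs \<subseteq> I}"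
    then obtain xs where xs: "z = prod_list xs" "length xs = n" "set xs \<subseteq> I" by blast
    show "z \<in> ?J"
    proof (rule CollectI, rule ballI)
      fix y assume "y \<in> I"
      then have "prod_list (y # xs) \<in> {prod_list xs | xs. length xs = Suc n \<and> set xs \<subseteq> I}"
        using xs by (intro CollectI exI[of _ "y # xs"]) auto
      then have "prod_list (y # xs) \<in> ?K" unfolding ideal_pow_def by (rule subsetD[OF ideal_gen_sub])
      then show "z * y \<in> ?K" using xs by (simp add: mult.commute)
    qed
  qed
  then have "ideal_pow I n \<subseteq> ?J" unfolding ideal_pow_def[of I n] by (rule ideal_gen_least[OF J])
  then show ?thesis using x y by blast
qed

lemma poly_ext_0: "is_ideal J \<Longrightarrow> 0 \<in> poly_ext J"
  unfolding poly_ext_def by (auto simp: ideal_0)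
lemma poly_ext_add: "is_ideal J \<Longrightarrow> a \<in> poly_ext J \<Longrightarrow> b \<in> poly_ext J \<Longrightarrow> a + b \<in> poly_ext J"
  unfolding poly_ext_def by (auto simp: ideal_add)
lemma poly_ext_diff: "is_ideal J \<Longrightarrow> a \<in> poly_ext J \<Longrightarrow> b \<in> poly_ext J \<Longrightarrow> a - b \<in> poly_ext J"
  unfolding poly_ext_def by (auto simp: ideal_diff)
lemma poly_ext_mult: "is_ideal J \<Longrightarrow> a \<in> poly_ext J \<Longrightarrow> p * a \<in> poly_ext J"
  unfolding poly_ext_def by (auto simp: coeff_mult intro!: ideal_sum ideal_lmult)
lemma poly_ext_mult2: "is_ideal J \<Longrightarrow> a \<in> poly_ext J \<Longrightarrow> a * p \<in> poly_ext J"
  using poly_ext_mult[of J a p] by (simp add: mult.commute)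
lemma poly_ext_one: "is_ideal J \<Longrightarrow> 1 \<in> J \<Longrightarrow> 1 \<in> poly_ext J"
  unfolding poly_ext_def by (auto simp: coeff_1 ideal_0)

lemma poly_ext_pow_mult:
  assumes I: "is_ideal I" and e: "e \<in> poly_ext (ideal_pow I n)" and c: "c \<in> poly_ext I"
  shows "e * c \<in> poly_ext (ideal_pow I (Suc n))"
  using e c by (auto simp: poly_ext_def coeff_mult intro!: ideal_sum[OF ideal_pow_ideal] ideal_pow_Suc[OF I])

lemma monic_mult:
  fixes p q :: "'a::comm_ring_1 poly"
  assumes p: "lead_coeff p = 1" and q: "q \<noteq> 0"
  shows "degree (p*q) = degree p + degree q \<and> lead_coeff (p*q) = lead_coeff q"
proof -
  have c: "coeff (p*q) (degree p + degree q) = lead_coeff q"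
    using coeff_mult_degree_sum[of p q] p by simp
  have "lead_coeff q \<noteq> 0" using q by simp
  then have "degree p + degree q \<le> degree (p*q)" using c le_degree by metis
  then have "degree (p*q) = degree p + degree q" using degree_mult_le[of p q] by linarith
  then show ?thesis using c by simp
qed

lemma monic_mult1:
  fixes p q :: "'a::comm_ring_1 poly"
  assumes "lead_coeff p = 1" "lead_coeff q = 1"
  shows "lead_coeff (p*q) = 1"
proof -
  have "q \<noteq> 0" using assms(2) by auto
  then have "lead_coeff (p*q) = lead_coeff q" using monic_mult[OF assms(1)] by blast
  then show ?thesis using assms(2) by simp
qed

lemma monic_power:
  fixes p :: "'a::comm_ring_1 poly"
  assumes "lead_coeff p = 1" shows "lead_coeff (p^n) = 1"
  by (induction n) (auto simp: monic_mult1 assms)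

lemma monic_cancel:
  fixes p :: "'a::comm_ring_1 poly"
  assumes p: "lead_coeff p = 1" and e: "p * a = p * b" shows "a = b"
proof (rule ccontr)
  assume "a \<noteq> b"
  then have ne: "a - b \<noteq> 0" by simp
  have "p * (a - b) = 0" using e by (simp add: right_diff_distrib)
  moreover have "lead_coeff (p * (a - b)) = lead_coeff (a - b)" using monic_mult[OF p ne] by blast
  ultimately have "lead_coeff (a - b) = 0" by simp
  then show False using ne leading_coeff_0_iff by blast
qed

lemma deg_drop:
  fixes p :: "'a::comm_ring_1 poly"
  assumes "degree p \<le> n" "coeff p n = 0" "p \<noteq> 0" shows "degree p < n"
proof (rule ccontr)
  assume "\<not> degree p < n"
  then have "degree p = n" using assms(1) by simp
  then have "lead_coeff p = 0" using assms(2) by simp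
  then show False using assms(3) by simp
qed

lemma monic_div:
  fixes G s :: "'a::comm_ring_1 poly"
  assumes G: "lead_coeff G = 1"
  shows "\<exists>q r. s = G*q + r \<and> (r = 0 \<or> degree r < degree G)"
proof (induction "degree s" arbitrary: s rule: less_induct)
  case less
  show ?case
  proof (cases "s = 0 \<or> degree s < degree G")
    case True
    then show ?thesis by (intro exI[of _ 0] exI[of _ s]) auto
  next
    case False
    then have s0: "s \<noteq> 0" and dg: "degree G \<le> degree s" by auto
    define M where "M = monom (lead_coeff s) (degree s - degree G)"
    have M0: "M \<noteq> 0" using s0 by (simp add: M_def)
    have dM: "degree M = degree s - degree G" using s0 by (simp add: M_def degree_monom_eq)
    have GM: "degree (G*M) = degree s" "lead_coeff (G*M) = lead_coeff s"
      using monic_mult[OF G M0] dM dg by (auto simp: M_def)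
    define s' where "s' = s - G*M"
    have "degree s' \<le> degree s" unfolding s'_def using degree_diff_le[of s "degree s" "G*M"] GM by simp
    moreover have "coeff s' (degree s) = 0" unfolding s'_def using GM by simp
    ultimately have "s' = 0 \<or> degree s' < degree s" using deg_drop by blast
    then show ?thesis
    proof
      assume "s' = 0"
      then have "s = G*M + 0" by (simp add: s'_def)
      then show ?thesis by blast
    next
      assume "degree s' < degree s"
      from less(1)[OF this] obtain q r where "s' = G*q + r" "r = 0 \<or> degree r < degree G" by blast
      then have "s = G*(M+q) + r" by (simp add: s'_def algebra_simps)
      then show ?thesis using \<open>r = 0 \<or> degree r < degree G\<close> by blast
    qed
  qed
qed

lemma monic_rem_ideal:
  fixes G r :: "'a::comm_ring_1 poly"
  assumes J: "is_ideal J" and G: "lead_coeff G = 1"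
    and rd: "r = 0 \<or> degree r < degree G"
  shows "r = x + G*z \<Longrightarrow> x \<in> poly_ext J \<Longrightarrow> r \<in> poly_ext J"
proof (induction "degree z" arbitrary: x z rule: less_induct)
  case less
  show ?case
  proof (cases "z = 0")
    case True
    then show ?thesis using less by simp
  next
    case False
    define d where "d = degree z"
    define a where "a = lead_coeff z"
    have GZ: "degree (G*z) = degree G + d" "lead_coeff (G*z) = a"
      using monic_mult[OF G False] by (auto simp: d_def a_def)
    have "coeff r (degree G + d) = 0"
    proof (cases "r = 0")
      case False
      then have "degree r < degree G + d" using rd by simp
      then show ?thesis by (rule coeff_eq_0)
    qed simp
    then have "coeff x (degree G + d) + a = 0" using less(2) GZ by simp
    then have "a = - coeff x (degree G + d)" by (simp add: eq_neg_iff_add_eq_0 add.commute)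
    then have aJ: "a \<in> J" using less(3) J by (auto simp: poly_ext_def ideal_uminus)
    have MJ: "monom a d \<in> poly_ext J" using aJ J by (auto simp: poly_ext_def coeff_monom ideal_0)
    define z' where "z' = z - monom a d"
    define x' where "x' = x + G * monom a d"
    have x'J: "x' \<in> poly_ext J" unfolding x'_def using less(3) MJ J by (simp add: poly_ext_add poly_ext_mult)
    have rr: "r = x' + G*z'" using less(2) by (simp add: x'_def z'_def algebra_simps)
    have "degree z' \<le> d" unfolding z'_def d_def
      using degree_diff_le[of z "degree z" "monom a (degree z)"] degree_monom_le[of a "degree z"] by simp
    moreover have "coeff z' d = 0" by (simp add: z'_def a_def d_def)
    ultimately have "z' = 0 \<or> degree z' < degree z" using deg_drop d_def by blast
    then show ?thesis
    proof
      assume "z' = 0" then show ?thesis using rr x'J by simp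
    next
      assume "degree z' < degree z"
      from less(1)[OF this rr x'J] show ?thesis .
    qed
  qed
qed

lemma pow_lemma:
  fixes F G v c :: "'a::comm_ring_1 poly"
  assumes I: "is_ideal I" and F: "F = G*v + c" and c: "c \<in> poly_ext I"
  shows "\<exists>w e. F^n = G*w + e \<and> e \<in> poly_ext (ideal_pow I n)"
proof (induction n)
  case 0
  show ?case using poly_ext_one[OF ideal_pow_ideal ideal_pow_0, of I]
    by (intro exI[of _ 0] exI[of _ 1]) simp
next
  case (Suc n)
  then obtain w e where we: "F^n = G*w + e" "e \<in> poly_ext (ideal_pow I n)" by blast
  have "F^Suc n = F^n * F" by (rule power_Suc2)
  also have "\<dots> = (G*w+e)*(G*v+c)" using we(1) F by metis
  also have "\<dots> = G*(w*(G*v+c) + e*v) + e*c" by (simp add: algebra_simps)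
  finally have "F^Suc n = G*(w*(G*v+c) + e*v) + e*c" .
  moreover have "e*c \<in> poly_ext (ideal_pow I (Suc n))" by (rule poly_ext_pow_mult[OF I we(2) c])
  ultimately show ?case by blast
qed

lemma pow_lemma2:
  fixes f g a b :: "'a::comm_ring_1 poly"
  assumes I: "is_ideal I" and F: "f^m = g*a + b" and b: "b \<in> poly_ext I"
  shows "\<exists>v c. f^(m*j) = g^j*v + c \<and> c \<in> poly_ext I"
proof (induction j)
  case 0
  show ?case using poly_ext_0[OF I] by (intro exI[of _ 1] exI[of _ 0]) simp
next
  case (Suc j)
  then obtain v c where vc: "f^(m*j) = g^j*v + c" "c \<in> poly_ext I" by blast
  have "f^(m*Suc j) = f^(m*j) * f^m" by (simp add: power_add)
  also have "\<dots> = (g^j*v + c) * (g*a + b)" using vc(1) F by metis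
  also have "\<dots> = g^Suc j * (v*a) + (g^j*v*b + c*(g*a+b))" by (simp add: algebra_simps)
  finally have "f^(m*Suc j) = g^Suc j * (v*a) + (g^j*v*b + c*(g*a+b))" .
  moreover have "g^j*v*b + c*(g*a+b) \<in> poly_ext I"
    using I b vc(2) by (simp add: poly_ext_add poly_ext_mult poly_ext_mult2)
  ultimately show ?case by blast
qed

lemma key:
  fixes f g d :: "'a::comm_ring_1 poly"
  assumes f: "lead_coeff f = 1" and g: "lead_coeff g = 1" and imp: "poly_implies f g"
    and dj: "f^j dvd d"
    and all: "\<And>N. \<exists>t u. d = f^(j+N)*t + (f*g)^j*u"
  shows "(f*g)^j dvd d"
proof -
  obtain I m a b where I: "is_ideal I" and int: "(\<Inter>j. ideal_pow I j) = {0}"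
    and b: "b \<in> poly_ext I" and fm: "f^m = g*a + b"
    using imp unfolding poly_implies_def by blast
  define G where "G = g^j"
  have G: "lead_coeff G = 1" unfolding G_def by (rule monic_power[OF g])
  obtain v c where vc: "f^(m*j) = G*v + c" "c \<in> poly_ext I"
    using pow_lemma2[OF I fm b, of j] unfolding G_def by blast
  obtain s where s: "d = f^j * s" using dj by blast
  obtain q r where qr: "s = G*q + r" "r = 0 \<or> degree r < degree G" using monic_div[OF G] by blast
  have "r \<in> poly_ext (ideal_pow I n)" for n
  proof -
    obtain w e where we: "(f^(m*j))^n = G*w + e" "e \<in> poly_ext (ideal_pow I n)"
      using pow_lemma[OF I vc] by blast
    obtain t u where tu: "d = f^(j+m*j*n)*t + (f*g)^j*u" using all by blast
    define X where "X = (f^(m*j))^n"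
    have p1: "f^(j+m*j*n) = f^j * X" unfolding X_def by (simp only: power_add power_mult)
    have p2: "(f*g)^j = f^j * G" unfolding G_def by (rule power_mult_distrib)
    have "f^j * s = f^j * X * t + f^j * G * u" using tu s p1 p2 by simp
    also have "\<dots> = f^j * (X * t + G*u)" by (simp only: distrib_left mult.assoc)
    finally have "f^j * s = f^j * (X * t + G*u)" .
    then have "s = X * t + G*u" by (rule monic_cancel[OF monic_power[OF f]])
    then have "G*q + r = (G*w + e) * t + G*u" using qr(1) we(1) X_def by simp
    then have "r = e*t + G*(w*t + u - q)" by (simp add: algebra_simps)
    then show ?thesis
      using monic_rem_ideal[OF ideal_pow_ideal G qr(2)] poly_ext_mult2[OF ideal_pow_ideal we(2)] by blast
  qed
  then have "coeff r i \<in> (\<Inter>j. ideal_pow I j)" for i by (auto simp: poly_ext_def)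
  then have "r = 0" using int by (auto simp: poly_eq_iff)
  then have "d = f^j * G * q" using s qr(1) by (simp add: mult.assoc)
  moreover have "(f*g)^j = f^j * G" unfolding G_def by (rule power_mult_distrib)
  ultimately have "d = (f*g)^j * q" by simp
  then show ?thesis by simp
qed

lemma completion_facts:
  fixes f g :: "'a::comm_ring_1 poly"
  assumes c: "c \<in> adic_completion (f*g)"
  obtains P where "\<And>j. c j = res_class (f*g) j (P j)"
    "\<And>j k. j \<le> k \<Longrightarrow> (f*g)^j dvd (P k - P j)"
    "\<And>j. completion_map f c j = res_class f j (P j)"
proof -
  from c have "\<forall>j. \<exists>p. c j = res_class (f*g) j p" unfolding adic_completion_def by blast
  then have "\<exists>P. \<forall>j. c j = res_class (f*g) j (P j)" by (rule choice)
  then obtain P where P: "\<And>j. c j = res_class (f*g) j (P j)" by blast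
  have dec: "\<And>j. c (Suc j) \<subseteq> c j" using c unfolding adic_completion_def by blast
  have mono: "j \<le> k \<Longrightarrow> c k \<subseteq> c j" for j k
    by (rule lift_Suc_antimono_le[of c]) (use dec in auto)
  have Pin: "P k \<in> c k" for k by (simp add: P res_class_def)
  have D: "(f*g)^j dvd (P k - P j)" if "j \<le> k" for j k
  proof -
    have "P k \<in> c j" using mono[OF that] Pin[of k] by blast
    then show ?thesis by (simp add: P res_class_def)
  qed
  have M: "completion_map f c j = res_class f j (P j)" for j
  proof
    show "completion_map f c j \<subseteq> res_class f j (P j)"
    proof
      fix r assume "r \<in> completion_map f c j"
      then obtain p where p: "p \<in> c j" "f^j dvd (r - p)" unfolding completion_map_def res_class_def by blast
      have "(f*g)^j dvd (p - P j)" using p(1) by (simp add: P res_class_def)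
      moreover have "(f*g)^j = f^j * g^j" by (rule power_mult_distrib)
      ultimately have "f^j dvd (p - P j)" using dvd_mult_left by metis
      then have "f^j dvd (r - p) + (p - P j)" using p(2) by (rule dvd_add[rotated])
      then show "r \<in> res_class f j (P j)" by (simp add: res_class_def)
    qed
  next
    show "res_class f j (P j) \<subseteq> completion_map f c j"
      unfolding completion_map_def using Pin[of j] by blast
  qed
  show ?thesis using that[OF P D M] by blast
qed

theorem proposition3p2:
  fixes f g :: "'a::comm_ring_1 poly"
  assumes "lead_coeff f = 1" and "lead_coeff g = 1"
    and "poly_implies f g"
  shows "inj_on (completion_map f) (adic_completion (f * g))"
proof (rule inj_onI)
  fix c c' assume c: "c \<in> adic_completion (f*g)" and c': "c' \<in> adic_completion (f*g)"
    and eq: "completion_map f c = completion_map f c'"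
  obtain P where P1: "\<And>j. c j = res_class (f*g) j (P j)"
    and P2: "\<And>j k. j \<le> k \<Longrightarrow> (f*g)^j dvd (P k - P j)"
    and P3: "\<And>j. completion_map f c j = res_class f j (P j)"
    using completion_facts[OF c] by blast
  obtain Q where Q1: "\<And>j. c' j = res_class (f*g) j (Q j)"
    and Q2: "\<And>j k. j \<le> k \<Longrightarrow> (f*g)^j dvd (Q k - Q j)"
    and Q3: "\<And>j. completion_map f c' j = res_class f j (Q j)"
    using completion_facts[OF c'] by blast
  define D where "D k = P k - Q k" for k
  have fD: "f^k dvd D k" for k
  proof -
    have "P k \<in> res_class f k (P k)" by (simp add: res_class_def)
    then have "P k \<in> res_class f k (Q k)" using P3[of k] Q3[of k] eq by simp
    then show ?thesis by (simp add: res_class_def D_def)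
  qed
  have "(f*g)^j dvd D j" for j
  proof (rule key[OF assms fD])
    fix N
    obtain t where t: "D (j+N) = f^(j+N) * t" using fD by blast
    have "(f*g)^j dvd (P (j+N) - P j) - (Q (j+N) - Q j)"
      using P2[of j "j+N"] Q2[of j "j+N"] by (simp add: dvd_diff)
    then obtain u where "(P (j+N) - P j) - (Q (j+N) - Q j) = (f*g)^j * u" by blast
    then have "D j = f^(j+N) * t + (f*g)^j * (-u)" using t by (simp add: D_def algebra_simps)
    then show "\<exists>t u. D j = f^(j+N)*t + (f*g)^j*u" by blast
  qed
  then show "c = c'"
  proof -
    assume h: "\<And>j. (f*g)^j dvd D j"
    show ?thesis
    proof
      fix j
      have "(f*g)^j dvd (r - P j) \<longleftrightarrow> (f*g)^j dvd (r - Q j)" for r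
      proof -
        have "r - Q j = D j + (r - P j)" by (simp add: D_def)
        then show ?thesis using dvd_add_right_iff[OF h[of j], of "r - P j"] by metis
      qed
      then show "c j = c' j" by (simp add: P1 Q1 res_class_def)
    qed
  qed
qed

end
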